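(* Let $n\ge 2$ and let $\mathcal{B}$ be a nonempty subset of $\mathbb{S}^n$. Suppose that there exist positive numbers $\alpha_B>0$ $(B\in\mathcal{B})$ such that $\alpha_A A+\alpha_B B\in\mathbb{S}^n_+$ for every distinct pair $A,B\in\mathcal{B}$ (Condition (D)). Then: (1) (Condition (B)) for every $B\in\mathcal{B}$, $$\{X\in\mathbb{S}^n_+ : B\bullet X=0\}\subseteq\{X\in\mathbb{S}^n_+ : A\bullet X\ge 0 \text{ for all } A\in\mathcal{B}\};$$ (2) (Condition (B)') for every distinct pair $A,B\in\mathcal{B}$, $A_<\cap B_\le=\emptyset$, where for $C\in\mathbb{S}^n$, $$C_< = \left\{u\in\mathbb{R}^{n-1} : \begin{pmatrix}u\\1\end{pmatrix}^T C\begin{pmatrix}u\\1\end{pmatrix}<0\right\},\qquad C_\le = \left\{u\in\mathbb{R}^{n-1} : \begin{pmatrix}u\\1\end{pmatrix}^T C\begin{pmatrix}u\\1\end{pmatrix}\le 0\right\}.$$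
   Context: $\mathbb{S}^n$ denotes the space of real $n\times n$ symmetric matrices, $\mathbb{S}^n_+$ the cone of positive semidefinite matrices in $\mathbb{S}^n$, and $A\bullet X=\sum_{i,j}A_{ij}X_{ij}$ the trace inner product. *)

theory Defs
  imports Complex_Main
begin

text \<open>Real n x n matrices are represented as functions nat => nat => real,
  indexed by 0..n-1 and zero outside that range.\<close>

definition symmat :: "nat \<Rightarrow> (nat \<Rightarrow> nat \<Rightarrow> real) set" where
  "symmat n = {A. (\<forall>i j. A i j = A j i) \<and> (\<forall>i j. n \<le> i \<or> n \<le> j \<longrightarrow> A i j = 0)}"

definition quadform :: "nat \<Rightarrow> (nat \<Rightarrow> nat \<Rightarrow> real) \<Rightarrow> (nat \<Rightarrow> real) \<Rightarrow> real" where
  "quadform n A x = (\<Sum>i<n. \<Sum>j<n. x i * A i j * x j)"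

definition psdmat :: "nat \<Rightarrow> (nat \<Rightarrow> nat \<Rightarrow> real) set" where
  "psdmat n = {X \<in> symmat n. \<forall>x. 0 \<le> quadform n X x}"

definition frob :: "nat \<Rightarrow> (nat \<Rightarrow> nat \<Rightarrow> real) \<Rightarrow> (nat \<Rightarrow> nat \<Rightarrow> real) \<Rightarrow> real" where
  "frob n A X = (\<Sum>i<n. \<Sum>j<n. A i j * X i j)"

text \<open>Vectors of R^(n-1) are functions nat => real, zero from index n-1 on.
  ext1 n u is the vector (u;1) of R^n.\<close>

definition vecs :: "nat \<Rightarrow> (nat \<Rightarrow> real) set" where
  "vecs m = {u. \<forall>i\<ge>m. u i = 0}"

definition ext1 :: "nat \<Rightarrow> (nat \<Rightarrow> real) \<Rightarrow> (nat \<Rightarrow> real)" where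
  "ext1 n u = (\<lambda>i. if i < n - 1 then u i else if i = n - 1 then 1 else 0)"

definition lt_set :: "nat \<Rightarrow> (nat \<Rightarrow> nat \<Rightarrow> real) \<Rightarrow> (nat \<Rightarrow> real) set" where
  "lt_set n C = {u \<in> vecs (n - 1). quadform n C (ext1 n u) < 0}"

definition le_set :: "nat \<Rightarrow> (nat \<Rightarrow> nat \<Rightarrow> real) \<Rightarrow> (nat \<Rightarrow> real) set" where
  "le_set n C = {u \<in> vecs (n - 1). quadform n C (ext1 n u) \<le> 0}"

end

theory Submission
  imports Defs
begin

definition qf :: "nat set \<Rightarrow> (nat \<Rightarrow> nat \<Rightarrow> real) \<Rightarrow> (nat \<Rightarrow> real) \<Rightarrow> real" where
  "qf S M x = (\<Sum>i\<in>S. \<Sum>j\<in>S. x i * M i j * x j)"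

definition fr :: "nat set \<Rightarrow> (nat \<Rightarrow> nat \<Rightarrow> real) \<Rightarrow> (nat \<Rightarrow> nat \<Rightarrow> real) \<Rightarrow> real" where
  "fr S P X = (\<Sum>i\<in>S. \<Sum>j\<in>S. P i j * X i j)"

lemma E1:
  assumes "finite S" "a \<notin> S" "\<And>i j. M i j = M j i"
  shows "qf (insert a S) M x = (x a)^2 * M a a + 2 * x a * (\<Sum>j\<in>S. M a j * x j) + qf S M x"
proof -
  have "qf (insert a S) M x = x a * M a a * x a + (\<Sum>j\<in>S. x a * M a j * x j)
     + (\<Sum>i\<in>S. x i * M i a * x a) + qf S M x"
    using assms by (simp add: qf_def sum.distrib algebra_simps)
  moreover have "(\<Sum>i\<in>S. x i * M i a * x a) = x a * (\<Sum>j\<in>S. M a j * x j)"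
    by (simp add: sum_distrib_left assms(3) algebra_simps)
  moreover have "(\<Sum>j\<in>S. x a * M a j * x j) = x a * (\<Sum>j\<in>S. M a j * x j)"
    by (simp add: sum_distrib_left algebra_simps)
  ultimately show ?thesis by (simp add: power2_eq_square)
qed

lemma E2:
  assumes "finite S" "a \<notin> S" "\<And>i j. M i j = M j i" "\<And>i j. X i j = X j i"
  shows "fr (insert a S) M X = M a a * X a a + 2 * (\<Sum>j\<in>S. M a j * X a j) + fr S M X"
proof -
  have "fr (insert a S) M X = M a a * X a a + (\<Sum>j\<in>S. M a j * X a j)
     + (\<Sum>i\<in>S. M i a * X i a) + fr S M X"
    using assms by (simp add: fr_def sum.distrib algebra_simps)
  moreover have "(\<Sum>i\<in>S. M i a * X i a) = (\<Sum>j\<in>S. M a j * X a j)"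
    using assms(3,4) by metis
  ultimately show ?thesis by simp
qed

lemma qf_Y:
  "qf S (\<lambda>i j. X i j - X a i * X a j / d) x = qf S X x - (\<Sum>j\<in>S. X a j * x j)^2 / d"
proof -
  have "qf S (\<lambda>i j. X i j - X a i * X a j / d) x
      = qf S X x - (\<Sum>i\<in>S. \<Sum>j\<in>S. (x i * X a i) * (X a j * x j)) / d"
    by (simp add: qf_def sum_subtractf sum_divide_distrib algebra_simps)
  also have "(\<Sum>i\<in>S. \<Sum>j\<in>S. (x i * X a i) * (X a j * x j)) = (\<Sum>j\<in>S. X a j * x j)^2"
    by (simp add: power2_eq_square sum_product mult.commute)
  finally show ?thesis .
qed

lemma fr_Y:
  "fr S P (\<lambda>i j. X i j - X a i * X a j / d) = fr S P X - qf S P (X a) / d"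
  by (simp add: fr_def qf_def sum_subtractf sum_divide_distrib algebra_simps)

lemma tquad:
  fixes L q :: real
  assumes "\<forall>t. 0 \<le> 2 * t * L + q"
  shows "L = 0"
proof (rule ccontr)
  assume "L \<noteq> 0"
  have "0 \<le> 2 * (-(\<bar>q\<bar>+1)/(2*L)) * L + q" using assms by blast
  also have "2 * (-(\<bar>q\<bar>+1)/(2*L)) * L = -(\<bar>q\<bar>+1)" using \<open>L \<noteq> 0\<close> by (simp add: field_simps)
  finally show False by linarith
qed

lemma main:
  assumes "finite S"
  shows "(\<forall>i j. P i j = P j i) \<longrightarrow> (\<forall>x. 0 \<le> qf S P x) \<longrightarrow>
         (\<forall>X. (\<forall>i j. X i j = X j i) \<longrightarrow> (\<forall>x. 0 \<le> qf S X x) \<longrightarrow> 0 \<le> fr S P X)"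
  using assms
proof (induction S rule: finite_induct)
  case empty
  then show ?case by (simp add: fr_def)
next
  case (insert a S)
  show ?case
  proof (intro impI allI)
    fix X
    assume Ps: "\<forall>i j. P i j = P j i" and Pp: "\<forall>x. 0 \<le> qf (insert a S) P x"
      and Xs: "\<forall>i j. X i j = X j i" and Xp: "\<forall>x. 0 \<le> qf (insert a S) X x"
    have qfX: "qf (insert a S) X x = (x a)^2 * X a a + 2 * x a * (\<Sum>j\<in>S. X a j * x j) + qf S X x" for x
      using E1[OF insert(1,2)] Xs by blast
    have qfP: "qf (insert a S) P x = (x a)^2 * P a a + 2 * x a * (\<Sum>j\<in>S. P a j * x j) + qf S P x" for x
      using E1[OF insert(1,2)] Ps by blast
    have qfupd: "qf S M (x(a := t)) = qf S M x" for M x t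
      using insert(2) unfolding qf_def by (intro sum.cong refl) auto
    have PS: "0 \<le> qf S P x" for x
      using Pp[rule_format, of "x(a := 0)"] qfP[of "x(a:=0)"] qfupd[of P x 0] by simp
    have sumupd: "(\<Sum>j\<in>S. M a j * (x(a := t)) j) = (\<Sum>j\<in>S. M a j * x j)" for M x t
      using insert(2) by (intro sum.cong refl) auto
    have IH: "\<And>Y. (\<forall>i j. Y i j = Y j i) \<Longrightarrow> (\<forall>x. 0 \<le> qf S Y x) \<Longrightarrow> 0 \<le> fr S P Y"
      using insert(3) Ps PS by blast
    have frX: "fr (insert a S) P X = P a a * X a a + 2 * (\<Sum>j\<in>S. P a j * X a j) + fr S P X"
      using E2[OF insert(1,2)] Ps Xs by blast
    have daa: "0 \<le> X a a"
      using Xp[rule_format, of "(\<lambda>_. 0)(a := 1)"] qfX[of "(\<lambda>_. 0)(a := 1)"]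
        qfupd[of X "\<lambda>_. 0" 1] sumupd[of X "\<lambda>_. 0" 1]
      by (simp add: qf_def)
    show "0 \<le> fr (insert a S) P X"
    proof (cases "X a a = 0")
      case True
      have XS: "0 \<le> qf S X x" for x
        using Xp[rule_format, of "x(a := 0)"] qfX[of "x(a:=0)"] qfupd by simp
      let ?x = "X a"
      have "\<forall>t. 0 \<le> 2 * t * (\<Sum>j\<in>S. X a j * ?x j) + qf S X ?x"
      proof
        fix t
        show "0 \<le> 2 * t * (\<Sum>j\<in>S. X a j * ?x j) + qf S X ?x"
          using Xp[rule_format, of "?x(a := t)"] qfX[of "?x(a:=t)"] qfupd[of X ?x t]
            sumupd[of X ?x t] True by simp
      qed
      hence "(\<Sum>j\<in>S. X a j * X a j) = 0" by (rule tquad)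
      hence "\<forall>j\<in>S. X a j * X a j = 0"
        using insert(1) by (subst (asm) sum_nonneg_eq_0_iff) auto
      hence z: "\<forall>j\<in>S. X a j = 0" by simp
      have "(\<Sum>j\<in>S. P a j * X a j) = 0" using z by simp
      then show ?thesis using frX True IH[OF Xs] XS by simp
    next
      case False
      define d where "d = X a a"
      have dpos: "d > 0" using False daa d_def by simp
      define Y where "Y = (\<lambda>i j. X i j - X a i * X a j / d)"
      have Ys: "\<forall>i j. Y i j = Y j i" using Xs unfolding Y_def by (simp add: mult.commute)
      have Yp: "0 \<le> qf S Y x" for x
      proof -
        define L where "L = (\<Sum>j\<in>S. X a j * x j)"
        have "0 \<le> qf (insert a S) X (x(a := - L / d))" using Xp by blast
        also have "\<dots> = (L/d)^2 * d + 2 * (-L/d) * L + qf S X x"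
          using qfX[of "x(a := - L / d)"] qfupd[of X x] sumupd[of X x] d_def L_def by simp
        also have "\<dots> = qf S X x - L^2 / d" using dpos by (simp add: field_simps power2_eq_square)
        also have "\<dots> = qf S Y x" unfolding Y_def qf_Y L_def ..
        finally show ?thesis .
      qed
      have "fr (insert a S) P X = fr S P Y + qf (insert a S) P (X a) / d"
      proof -
        have "qf (insert a S) P (X a) = d^2 * P a a + 2 * d * (\<Sum>j\<in>S. P a j * X a j) + qf S P (X a)"
          using qfP[of "X a"] d_def by simp
        hence "qf (insert a S) P (X a) / d = d * P a a + 2 * (\<Sum>j\<in>S. P a j * X a j) + qf S P (X a) / d"
          using dpos by (simp add: field_simps power2_eq_square)
        moreover have "fr S P Y = fr S P X - qf S P (X a) / d" unfolding Y_def fr_Y ..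
        ultimately show ?thesis using frX d_def by simp
      qed
      moreover have "0 \<le> fr S P Y" using IH[OF Ys] Yp by blast
      moreover have "0 \<le> qf (insert a S) P (X a) / d" using Pp dpos by simp
      ultimately show ?thesis by simp
    qed
  qed
qed

lemma psd_frob:
  assumes "P \<in> psdmat n" "X \<in> psdmat n"
  shows "0 \<le> frob n P X"
proof -
  have q: "quadform n M x = qf {..<n} M x" for M x by (simp add: quadform_def qf_def)
  have f: "frob n P X = fr {..<n} P X" by (simp add: frob_def fr_def)
  show ?thesis using main[of "{..<n}" P] assms unfolding f
    by (simp add: psdmat_def symmat_def q)
qed

lemma quad_lin:
  "quadform n (\<lambda>i j. a * A i j + b * B i j) x = a * quadform n A x + b * quadform n B x"
  by (simp add: quadform_def sum.distrib sum_distrib_left algebra_simps)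

lemma frob_lin:
  "frob n (\<lambda>i j. a * A i j + b * B i j) X = a * frob n A X + b * frob n B X"
  by (simp add: frob_def sum.distrib sum_distrib_left algebra_simps)

theorem theorem1p1:
  fixes n :: nat and \<B> :: "(nat \<Rightarrow> nat \<Rightarrow> real) set"
  assumes "n \<ge> 2"
    and "\<B> \<noteq> {}" and "\<B> \<subseteq> symmat n"
    and "\<exists>\<alpha> :: (nat \<Rightarrow> nat \<Rightarrow> real) \<Rightarrow> real.
           (\<forall>B\<in>\<B>. \<alpha> B > 0) \<and>
           (\<forall>A\<in>\<B>. \<forall>B\<in>\<B>. A \<noteq> B \<longrightarrow>
              (\<lambda>i j. \<alpha> A * A i j + \<alpha> B * B i j) \<in> psdmat n)"
  shows "(\<forall>B\<in>\<B>. {X \<in> psdmat n. frob n B X = 0}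
                   \<subseteq> {X \<in> psdmat n. \<forall>A\<in>\<B>. frob n A X \<ge> 0})
       \<and> (\<forall>A\<in>\<B>. \<forall>B\<in>\<B>. A \<noteq> B \<longrightarrow> lt_set n A \<inter> le_set n B = {})"
proof -
  obtain \<alpha> :: "(nat \<Rightarrow> nat \<Rightarrow> real) \<Rightarrow> real" where
    pos: "\<forall>B\<in>\<B>. \<alpha> B > 0" and
    psd: "\<forall>A\<in>\<B>. \<forall>B\<in>\<B>. A \<noteq> B \<longrightarrow> (\<lambda>i j. \<alpha> A * A i j + \<alpha> B * B i j) \<in> psdmat n"
    using assms(4) by blast
  have P1: "\<forall>B\<in>\<B>. {X \<in> psdmat n. frob n B X = 0}
                   \<subseteq> {X \<in> psdmat n. \<forall>A\<in>\<B>. frob n A X \<ge> 0}"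
  proof (intro ballI subsetI)
    fix B X assume B: "B \<in> \<B>" and X: "X \<in> {X \<in> psdmat n. frob n B X = 0}"
    show "X \<in> {X \<in> psdmat n. \<forall>A\<in>\<B>. frob n A X \<ge> 0}"
    proof (simp add: X[simplified], intro ballI)
      fix A assume A: "A \<in> \<B>"
      show "0 \<le> frob n A X"
      proof (cases "A = B")
        case True then show ?thesis using X by simp
      next
        case False
        have "0 \<le> frob n (\<lambda>i j. \<alpha> A * A i j + \<alpha> B * B i j) X"
          using psd_frob psd A B False X by blast
        hence "0 \<le> \<alpha> A * frob n A X" using X by (simp add: frob_lin)
        thus ?thesis using pos A by (meson not_le mult_pos_neg)
      qed
    qed
  qed
  have P2: "\<forall>A\<in>\<B>. \<forall>B\<in>\<B>. A \<noteq> B \<longrightarrow> lt_set n A \<inter> le_set n B = {}"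
  proof (intro ballI impI equalityI subsetI)
    fix A B u assume A: "A \<in> \<B>" and B: "B \<in> \<B>" and AB: "A \<noteq> B"
      and u: "u \<in> lt_set n A \<inter> le_set n B"
    let ?v = "ext1 n u"
    have "0 \<le> quadform n (\<lambda>i j. \<alpha> A * A i j + \<alpha> B * B i j) ?v"
      using psd A B AB by (simp add: psdmat_def)
    hence "0 \<le> \<alpha> A * quadform n A ?v + \<alpha> B * quadform n B ?v" by (simp add: quad_lin)
    moreover have "quadform n A ?v < 0" "quadform n B ?v \<le> 0"
      using u by (auto simp: lt_set_def le_set_def)
    moreover have "\<alpha> A > 0" "\<alpha> B > 0" using pos A B by auto
    ultimately have False
      by (smt (verit) mult_pos_neg mult_nonneg_nonpos)
    thus "u \<in> {}" ..
  qed auto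
  show ?thesis using P1 P2 by blast
qed

end
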